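(* Let $G$ be a directed graph with vertices $s,t$, $k\ge1$, and $e\in E(G)$. The multiplicity function $\mu_e:U^k_{\mathrm{lr}}\to\mathbb N$ is modular on the lattice $L^*$, i.e. $\mu_e(C_1\vee C_2)+\mu_e(C_1\wedge C_2)=\mu_e(C_1)+\mu_e(C_2)$ for all $C_1,C_2\in L^*$.
   Context: An $s$-$t$ cut of a directed graph $G$ is a set $X\subseteq E(G)$ such that removing $X$ leaves no directed $s$-$t$ path; $\Gamma_G(s,t)$ is the set of $s$-$t$ cuts of minimum cardinality $\lambda(G)$. Fix a maximum-size collection $\mathcal P$ of pairwise edge-disjoint directed $s$-$t$ paths (each minimum $s$-$t$ cut contains exactly one edge of each path in $\mathcal P$). For $X,Y\in\Gamma_G(s,t)$, $S_{\min}(X\cup Y)$ (resp. $S_{\max}(X\cup Y)$) consists, for each $p\in\mathcal P$, of the edge of $(X\cup Y)\cap p$ occurring first (resp. last) along $p$. $X\le Y$ means every directed $s$-$t$ path meets an edge of $X$ at or before an edge of $Y$. $U^k_{\mathrm{lr}}$ is the set of $k$-tuples $[X_1,\dots,X_k]$ of elements of $\Gamma_G(s,t)$ with $X_i\le X_j$ for all $i<j$. $L^*$ is the lattice on $U^k_{\mathrm{lr}}$ with componentwise order ($[X_i]\preceq[Y_i]$ iff $X_i\le Y_i$ for all $i$), join $[X_i]_i\vee[Y_i]_i=[S_{\max}(X_i\cup Y_i)]_i$ and meet $[X_i]_i\wedge[Y_i]_i=[S_{\min}(X_i\cup Y_i)]_i$. For $C=[X_1,\dots,X_k]$, $\mu_e(C)$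 is the number of indices $i$ with $e\in X_i$. *)

theory Defs
  imports Main
begin

text \<open>A directed (multi)graph is given by a finite edge set E together with
tail/head maps src, tgt on edges.\<close>

definition is_st_path ::
  "'e set \<Rightarrow> ('e \<Rightarrow> 'v) \<Rightarrow> ('e \<Rightarrow> 'v) \<Rightarrow> 'v \<Rightarrow> 'v \<Rightarrow> 'e list \<Rightarrow> bool" where
  "is_st_path E src tgt s t p \<longleftrightarrow>
     p \<noteq> [] \<and> set p \<subseteq> E \<and> src (hd p) = s \<and> tgt (last p) = t \<and>
     (\<forall>i. Suc i < length p \<longrightarrow> tgt (p ! i) = src (p ! Suc i)) \<and>
     distinct (map src p @ [tgt (last p)])"

definition is_st_cut ::
  "'e set \<Rightarrow> ('e \<Rightarrow> 'v) \<Rightarrow> ('e \<Rightarrow> 'v) \<Rightarrow> 'v \<Rightarrow> 'v \<Rightarrow> 'e set \<Rightarrow> bool" where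
  "is_st_cut E src tgt s t X \<longleftrightarrow> X \<subseteq> E \<and>
     (\<forall>p. is_st_path E src tgt s t p \<longrightarrow> set p \<inter> X \<noteq> {})"

definition min_cuts ::
  "'e set \<Rightarrow> ('e \<Rightarrow> 'v) \<Rightarrow> ('e \<Rightarrow> 'v) \<Rightarrow> 'v \<Rightarrow> 'v \<Rightarrow> 'e set set" where
  "min_cuts E src tgt s t = {X. is_st_cut E src tgt s t X \<and>
     (\<forall>Y. is_st_cut E src tgt s t Y \<longrightarrow> card X \<le> card Y)}"

definition edge_disjoint_paths ::
  "'e set \<Rightarrow> ('e \<Rightarrow> 'v) \<Rightarrow> ('e \<Rightarrow> 'v) \<Rightarrow> 'v \<Rightarrow> 'v \<Rightarrow> 'e list set \<Rightarrow> bool" where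
  "edge_disjoint_paths E src tgt s t P \<longleftrightarrow>
     (\<forall>p\<in>P. is_st_path E src tgt s t p) \<and>
     (\<forall>p\<in>P. \<forall>q\<in>P. p \<noteq> q \<longrightarrow> set p \<inter> set q = {})"

definition max_disjoint_paths ::
  "'e set \<Rightarrow> ('e \<Rightarrow> 'v) \<Rightarrow> ('e \<Rightarrow> 'v) \<Rightarrow> 'v \<Rightarrow> 'v \<Rightarrow> 'e list set \<Rightarrow> bool" where
  "max_disjoint_paths E src tgt s t P \<longleftrightarrow>
     finite P \<and> edge_disjoint_paths E src tgt s t P \<and>
     (\<forall>Q. finite Q \<and> edge_disjoint_paths E src tgt s t Q \<longrightarrow> card Q \<le> card P)"

definition S_min :: "'e list set \<Rightarrow> 'e set \<Rightarrow> 'e set" where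
  "S_min P Z = (\<lambda>p. p ! (LEAST i. i < length p \<and> p ! i \<in> Z)) ` {p\<in>P. set p \<inter> Z \<noteq> {}}"

definition S_max :: "'e list set \<Rightarrow> 'e set \<Rightarrow> 'e set" where
  "S_max P Z = (\<lambda>p. p ! (GREATEST i. i < length p \<and> p ! i \<in> Z)) ` {p\<in>P. set p \<inter> Z \<noteq> {}}"

definition cut_le ::
  "'e set \<Rightarrow> ('e \<Rightarrow> 'v) \<Rightarrow> ('e \<Rightarrow> 'v) \<Rightarrow> 'v \<Rightarrow> 'v \<Rightarrow> 'e set \<Rightarrow> 'e set \<Rightarrow> bool" where
  "cut_le E src tgt s t X Y \<longleftrightarrow>
     (\<forall>p. is_st_path E src tgt s t p \<longrightarrow>
        (\<exists>i j. i \<le> j \<and> j < length p \<and> p ! i \<in> X \<and> p ! j \<in> Y))"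

definition U_lr ::
  "'e set \<Rightarrow> ('e \<Rightarrow> 'v) \<Rightarrow> ('e \<Rightarrow> 'v) \<Rightarrow> 'v \<Rightarrow> 'v \<Rightarrow> nat \<Rightarrow> 'e set list set" where
  "U_lr E src tgt s t k = {C. length C = k \<and> set C \<subseteq> min_cuts E src tgt s t \<and>
     (\<forall>i j. i < j \<and> j < k \<longrightarrow> cut_le E src tgt s t (C ! i) (C ! j))}"

definition L_join :: "'e list set \<Rightarrow> 'e set list \<Rightarrow> 'e set list \<Rightarrow> 'e set list" where
  "L_join P C D = map2 (\<lambda>X Y. S_max P (X \<union> Y)) C D"

definition L_meet :: "'e list set \<Rightarrow> 'e set list \<Rightarrow> 'e set list \<Rightarrow> 'e set list" where
  "L_meet P C D = map2 (\<lambda>X Y. S_min P (X \<union> Y)) C D"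

definition mult :: "'e \<Rightarrow> 'e set list \<Rightarrow> nat" where
  "mult e C = card {i. i < length C \<and> e \<in> C ! i}"

end

theory Submission
  imports Defs
begin

definition net :: "('e \<Rightarrow> 'v) \<Rightarrow> ('e \<Rightarrow> 'v) \<Rightarrow> 'e set \<Rightarrow> 'v \<Rightarrow> int" where
  "net src tgt A v = (\<Sum>e\<in>A. of_bool (src e = v) - of_bool (tgt e = v))"

definition reach :: "'e set \<Rightarrow> ('e \<Rightarrow> 'v) \<Rightarrow> ('e \<Rightarrow> 'v) \<Rightarrow> 'v \<Rightarrow> 'v set" where
  "reach G src tgt s = insert s {v. \<exists>p. is_st_path G src tgt s v p}"

lemma path_distinct:
  assumes "is_st_path G src tgt a b p" shows "distinct p"
proof -
  have "distinct (map src p)" using assms unfolding is_st_path_def by auto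
  thus ?thesis using distinct_map by blast
qed

lemma path_mono: "is_st_path G src tgt a b p \<Longrightarrow> G \<subseteq> H \<Longrightarrow> is_st_path H src tgt a b p"
  unfolding is_st_path_def by auto

lemma path_ne: "is_st_path G src tgt a b p \<Longrightarrow> a \<noteq> b"
proof
  assume p: "is_st_path G src tgt a b p" and ab: "a = b"
  then have "p \<noteq> []" "src (hd p) = a" "tgt (last p) = b"
    "distinct (map src p @ [tgt (last p)])" unfolding is_st_path_def by auto
  then have "a \<in> set (map src p)" by (metis hd_in_set image_eqI list.set_map)
  then show False using \<open>distinct (map src p @ [tgt (last p)])\<close> \<open>tgt (last p) = b\<close> ab by auto
qed

lemma path_net:
  assumes p: "is_st_path G src tgt a b p"
  shows "net src tgt (set p) v = of_bool (a = v) - of_bool (b = v)"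
proof -
  define n where "n = length p"
  define w where "w i = (if i < n then src (p ! i) else tgt (last p))" for i
  have ne: "p \<noteq> []" and h: "src (hd p) = a" and l: "tgt (last p) = b"
    and c: "\<And>i. Suc i < length p \<Longrightarrow> tgt (p ! i) = src (p ! Suc i)"
    using p unfolding is_st_path_def by auto
  have tw: "tgt (p ! i) = w (Suc i)" if "i < n" for i
  proof (cases "Suc i < n")
    case True then show ?thesis using c w_def n_def by auto
  next
    case False then have "i = n - 1" using that by auto
    then show ?thesis using False ne n_def w_def by (simp add: last_conv_nth)
  qed
  have "net src tgt (set p) v = (\<Sum>e\<leftarrow>p. of_bool (src e = v) - of_bool (tgt e = v))"
    unfolding net_def using path_distinct[OF p] by (simp add: sum_list_distinct_conv_sum_set)
  also have "\<dots> = (\<Sum>i<n. of_bool (src (p!i) = v) - of_bool (tgt (p!i) = v))"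
    unfolding n_def by (simp add: sum_list_sum_nth atLeast0LessThan)
  also have "\<dots> = (\<Sum>i<n. of_bool (w i = v) - of_bool (w (Suc i) = v))"
    by (rule sum.cong) (auto simp: tw w_def)
  also have "\<dots> = of_bool (w 0 = v) - of_bool (w n = v)"
    by (rule sum_lessThan_telescope')
  also have "w 0 = a" using ne h n_def w_def by (simp add: hd_conv_nth)
  also have "w n = b" using l w_def by simp
  finally show ?thesis .
qed

lemma reach_closed:
  assumes v: "v \<in> reach G src tgt s" and e: "e \<in> G" "src e = v"
  shows "tgt e \<in> reach G src tgt s"
proof (cases "tgt e = s \<or> tgt e = v")
  case True then show ?thesis using v by (auto simp: reach_def)
next
  case False
  then have ns: "tgt e \<noteq> s" "tgt e \<noteq> v" by auto
  show ?thesis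
  proof (cases "v = s")
    case True
    have "is_st_path G src tgt s (tgt e) [e]" unfolding is_st_path_def using e True ns by auto
    then show ?thesis by (auto simp: reach_def)
  next
    case False
    then obtain p where p: "is_st_path G src tgt s v p" using v by (auto simp: reach_def)
    have ne: "p \<noteq> []" and h: "src (hd p) = s" and l: "tgt (last p) = v"
      and c: "\<And>i. Suc i < length p \<Longrightarrow> tgt (p ! i) = src (p ! Suc i)"
      and d: "distinct (map src p @ [tgt (last p)])" and sub: "set p \<subseteq> G"
      using p unfolding is_st_path_def by auto
    show ?thesis
    proof (cases "tgt e \<in> src ` set p")
      case True
      then obtain j where j: "j < length p" "src (p ! j) = tgt e" by (auto simp: in_set_conv_nth)
      have j0: "j \<noteq> 0"
      proof
        assume "j = 0" then show False using j h ns ne by (simp add: hd_conv_nth)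
      qed
      have lq: "tgt (last (take j p)) = src (p ! j)"
      proof -
        obtain i where i: "j = Suc i" using j0 by (cases j) auto
        have "last (take j p) = p ! i" using i j by (simp add: take_Suc_conv_app_nth)
        then show ?thesis using c[of i] i j by simp
      qed
      define q where "q = take j p"
      have "is_st_path G src tgt s (tgt e) q"
        unfolding is_st_path_def
      proof (intro conjI allI impI)
        show "q \<noteq> []" using j0 ne q_def by simp
        show "set q \<subseteq> G" using sub q_def by (meson order_trans set_take_subset)
        show "src (hd q) = s" using j0 ne h q_def by (simp add: hd_conv_nth)
        show "tgt (last q) = tgt e" using lq j q_def by simp
        show "tgt (q ! i) = src (q ! Suc i)" if "Suc i < length q" for i
          using that c q_def by simp
        have "distinct (map src p)" using d by simp
        then have "distinct (map src (take (Suc j) p))" by (simp add: take_map[symmetric])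
        moreover have "take (Suc j) p = q @ [p ! j]" using j q_def by (simp add: take_Suc_conv_app_nth)
        moreover have "tgt (last q) = src (p ! j)" using lq q_def by simp
        ultimately show "distinct (map src q @ [tgt (last q)])" by simp
      qed
      then show ?thesis by (auto simp: reach_def)
    next
      case False
      have "is_st_path G src tgt s (tgt e) (p @ [e])"
        unfolding is_st_path_def
      proof (intro conjI allI impI)
        show "p @ [e] \<noteq> []" by simp
        show "set (p @ [e]) \<subseteq> G" using sub e by simp
        show "src (hd (p @ [e])) = s" using ne h by simp
        show "tgt (last (p @ [e])) = tgt e" by simp
        show "tgt ((p @ [e]) ! i) = src ((p @ [e]) ! Suc i)" if "Suc i < length (p @ [e])" for i
        proof (cases "Suc i < length p")
          case True then show ?thesis using c by (simp add: nth_append)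
        next
          case False then have "i = length p - 1" using that by simp
          then show ?thesis using False ne l e by (simp add: nth_append last_conv_nth)
        qed
        show "distinct (map src (p @ [e]) @ [tgt (last (p @ [e]))])"
          using d l e False ns by (simp add: image_iff)
      qed
      then show ?thesis by (auto simp: reach_def)
    qed
  qed
qed

lemma reach_finite:
  assumes "finite G" shows "finite (reach G src tgt s)"
proof -
  have "reach G src tgt s \<subseteq> insert s (tgt ` G)"
    unfolding reach_def is_st_path_def by (auto intro!: imageI)
  then show ?thesis using assms finite_subset by blast
qed

lemma path_cross:
  assumes p: "is_st_path G src tgt a b p" and "a \<in> R" "b \<notin> R"
  shows "\<exists>e\<in>set p. src e \<in> R \<and> tgt e \<notin> R"
proof (rule ccontr)
  assume nc: "\<not> ?thesis"
  have ne: "p \<noteq> []" and h: "src (hd p) = a" and l: "tgt (last p) = b"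
    and c: "\<And>i. Suc i < length p \<Longrightarrow> tgt (p ! i) = src (p ! Suc i)"
    using p unfolding is_st_path_def by auto
  have "i < length p \<longrightarrow> src (p ! i) \<in> R" for i
  proof (induction i)
    case 0 then show ?case using h ne assms(2) by (simp add: hd_conv_nth)
  next
    case (Suc i) then show ?case using c nc by (metis Suc_lessD nth_mem)
  qed
  then have "tgt (p ! (length p - 1)) \<in> R" using nc ne by (metis diff_less length_greater_0_conv nth_mem zero_less_one)
  then show False using l ne assms(3) by (simp add: last_conv_nth)
qed

lemma sum_of_bool_eq: "finite R \<Longrightarrow> (\<Sum>v\<in>R. (of_bool (x = v) :: int)) = of_bool (x \<in> R)"
  by (simp add: of_bool_def sum.delta)

lemma net_diff: "finite A \<Longrightarrow> B \<subseteq> A \<Longrightarrow> net src tgt (A - B) v = net src tgt A v - net src tgt B v"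
  unfolding net_def by (simp add: sum.subset_diff[of B A])

lemma decomp:
  assumes "finite F" "s \<noteq> t" "\<forall>v. v \<noteq> s \<and> v \<noteq> t \<longrightarrow> net src tgt F v = 0"
    "net src tgt F s = int m"
  shows "\<exists>Q. finite Q \<and> card Q = m \<and> edge_disjoint_paths F src tgt s t Q"
  using assms
proof (induction m arbitrary: F)
  case 0
  then show ?case by (intro exI[of _ "{}"]) (simp add: edge_disjoint_paths_def)
next
  case (Suc m)
  have tR: "t \<in> reach F src tgt s"
  proof (rule ccontr)
    assume tn: "t \<notin> reach F src tgt s"
    define R where "R = reach F src tgt s"
    have fR: "finite R" unfolding R_def by (rule reach_finite[OF Suc.prems(1)])
    have sR: "s \<in> R" unfolding R_def reach_def by simp
    have "(\<Sum>v\<in>R. net src tgt F v) = net src tgt F s + (\<Sum>v\<in>R - {s}. net src tgt F v)"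
      using fR sR by (rule sum.remove)
    also have "(\<Sum>v\<in>R - {s}. net src tgt F v) = 0"
      proof (rule sum.neutral, rule ballI)
      fix v assume "v \<in> R - {s}"
      then have "v \<noteq> s" "v \<noteq> t" using tn R_def by auto
      then show "net src tgt F v = 0" using Suc.prems(3) by blast
    qed
    finally have e1: "(\<Sum>v\<in>R. net src tgt F v) = int (Suc m)" using Suc.prems(4) by simp
    have "(\<Sum>v\<in>R. net src tgt F v) = (\<Sum>e\<in>F. \<Sum>v\<in>R. of_bool (src e = v) - of_bool (tgt e = v))"
      unfolding net_def by (rule sum.swap)
    also have "\<dots> = (\<Sum>e\<in>F. of_bool (src e \<in> R) - of_bool (tgt e \<in> R))"
      proof (rule sum.cong[OF refl])
      fix e show "(\<Sum>v\<in>R. of_bool (src e = v) - of_bool (tgt e = v)) = (of_bool (src e \<in> R) - of_bool (tgt e \<in> R) :: int)"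
        using fR by (simp only: sum_subtractf sum_of_bool_eq)
    qed
    also have "\<dots> \<le> 0"
    proof (rule sum_nonpos)
      fix e assume "e \<in> F"
      then have "src e \<in> R \<Longrightarrow> tgt e \<in> R" using reach_closed[of "src e" F src tgt s e] R_def by blast
      then show "of_bool (src e \<in> R) - of_bool (tgt e \<in> R) \<le> (0::int)" by auto
    qed
    finally show False using e1 by simp
  qed
  then obtain p where p: "is_st_path F src tgt s t p"
    using Suc.prems(2) unfolding reach_def by auto
  have pF: "set p \<subseteq> F" using p unfolding is_st_path_def by auto
  define F' where "F' = F - set p"
  have nF': "net src tgt F' v = net src tgt F v - (of_bool (s = v) - of_bool (t = v))" for v
    unfolding F'_def net_diff[OF Suc.prems(1) pF] path_net[OF p] by simp
  obtain Q' where Q': "finite Q'" "card Q' = m" "edge_disjoint_paths F' src tgt s t Q'"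
    using Suc.IH[of F'] Suc.prems nF' F'_def by fastforce
  have pQ: "p \<notin> Q'"
  proof
    assume "p \<in> Q'"
    then have "is_st_path F' src tgt s t p" using Q'(3) unfolding edge_disjoint_paths_def by blast
    then have "set p \<subseteq> F'" "p \<noteq> []" unfolding is_st_path_def by auto
    then show False unfolding F'_def by (cases p) auto
  qed
  have dq: "set q \<subseteq> F'" if "q \<in> Q'" for q
    using Q'(3) that unfolding edge_disjoint_paths_def is_st_path_def by blast
  have "edge_disjoint_paths F src tgt s t (insert p Q')"
    unfolding edge_disjoint_paths_def
  proof (intro conjI ballI impI)
    fix q assume "q \<in> insert p Q'"
    then show "is_st_path F src tgt s t q"
      using p Q'(3) path_mono[of F' src tgt s t _ F] F'_def
      unfolding edge_disjoint_paths_def by blast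
  next
    fix q r assume "q \<in> insert p Q'" "r \<in> insert p Q'" "q \<noteq> r"
    then show "set q \<inter> set r = {}"
      using Q'(3) dq F'_def unfolding edge_disjoint_paths_def by blast
  qed
  then show ?case using Q' pQ by (intro exI[of _ "insert p Q'"]) simp
qed

lemma no_reenter:
  assumes p: "is_st_path G src tgt a b p"
    and clo: "\<And>e. e \<in> set p \<Longrightarrow> tgt e \<in> R \<Longrightarrow> src e \<in> R"
    and i: "tgt (p ! i) \<notin> R" and ij: "i < j" "j < length p"
  shows "src (p ! j) \<notin> R"
  using ij
proof (induction j)
  case 0 then show ?case by simp
next
  case (Suc j)
  have c: "tgt (p ! j) = src (p ! Suc j)" using p Suc.prems unfolding is_st_path_def by blast
  show ?case
  proof (cases "i = j")
    case True then show ?thesis using i c by simp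
  next
    case False
    then have "src (p ! j) \<notin> R" using Suc by simp
    then have "tgt (p ! j) \<notin> R" using clo Suc.prems by (meson Suc_lessD nth_mem)
    then show ?thesis using c by simp
  qed
qed

lemma menger_cut:
  assumes fE: "finite E" and mP: "max_disjoint_paths E src tgt s t P"
  shows "\<exists>X. is_st_cut E src tgt s t X \<and> card X \<le> card P"
proof (cases "s = t")
  case True
  have "is_st_cut E src tgt s t {}" unfolding is_st_cut_def using True by (auto dest: path_ne)
  then show ?thesis by (intro exI[of _ "{}"]) simp
next
  case st: False
  have fP: "finite P" using mP unfolding max_disjoint_paths_def by simp
  have paths: "\<And>p. p \<in> P \<Longrightarrow> is_st_path E src tgt s t p"
    using mP unfolding max_disjoint_paths_def edge_disjoint_paths_def by simp
  have disj: "\<And>p q. p \<in> P \<Longrightarrow> q \<in> P \<Longrightarrow> p \<noteq> q \<Longrightarrow> set p \<inter> set q = {}"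
    using mP unfolding max_disjoint_paths_def edge_disjoint_paths_def by simp
  have mx: "\<And>Q. finite Q \<Longrightarrow> edge_disjoint_paths E src tgt s t Q \<Longrightarrow> card Q \<le> card P"
    using mP unfolding max_disjoint_paths_def by simp
  define F where "F = (\<Union>p\<in>P. set p)"
  have FE: "F \<subseteq> E" unfolding F_def
  proof (rule UN_least)
    fix p assume "p \<in> P" then show "set p \<subseteq> E" using paths unfolding is_st_path_def by simp
  qed
  have fF: "finite F" using finite_subset[OF FE fE] .
  define src' where "src' e = (if e \<in> F then tgt e else src e)" for e
  define tgt' where "tgt' e = (if e \<in> F then src e else tgt e)" for e
  define R where "R = reach E src' tgt' s"
  have netF: "net src tgt F v = int (card P) * (of_bool (s = v) - of_bool (t = v))" for v
  proof -
    have "net src tgt F v = (\<Sum>p\<in>P. net src tgt (set p) v)"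
      unfolding F_def net_def using fP disj by (intro sum.UNION_disjoint) auto
    also have "\<dots> = (\<Sum>p\<in>P. of_bool (s = v) - of_bool (t = v))"
    proof (rule sum.cong[OF refl])
      fix p assume "p \<in> P" then show "net src tgt (set p) v = of_bool (s = v) - of_bool (t = v)"
        by (rule path_net[OF paths])
    qed
    finally show ?thesis by simp
  qed
  show ?thesis
  proof (cases "t \<in> R")
    case True
    then obtain q where q: "is_st_path E src' tgt' s t q" using st unfolding R_def reach_def by auto
    define Q where "Q = set q"
    have QE: "Q \<subseteq> E" using q unfolding Q_def is_st_path_def by auto
    have fQ: "finite Q" unfolding Q_def by simp
    define F' where "F' = (F - Q) \<union> (Q - F)"
    have F'E: "F' \<subseteq> E" using FE QE F'_def by auto
    have fF': "finite F'" using fF fQ F'_def by simp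
    have netF': "net src tgt F' v = net src tgt F v + (of_bool (s = v) - of_bool (t = v))" for v
    proof -
      define g where "g e = (of_bool (src e = v) - of_bool (tgt e = v) :: int)" for e
      have "net src tgt F' v = sum g (F - Q) + sum g (Q - F)"
        unfolding net_def F'_def g_def using fF fQ by (intro sum.union_disjoint) auto
      moreover have "net src tgt F v = sum g (F - Q) + sum g (F \<inter> Q)"
      proof -
        have "sum g F = sum g (F - (F \<inter> Q)) + sum g (F \<inter> Q)"
          using fF by (intro sum.subset_diff) auto
        moreover have "F - (F \<inter> Q) = F - Q" by auto
        ultimately show ?thesis unfolding net_def g_def by simp
      qed
      moreover have "net src' tgt' Q v = sum g (Q - F) - sum g (F \<inter> Q)"
      proof -
        have "net src' tgt' Q v = net src' tgt' (Q - (Q \<inter> F)) v + net src' tgt' (Q \<inter> F) v"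
          unfolding net_def using fQ by (intro sum.subset_diff) auto
        moreover have "net src' tgt' (Q - (Q \<inter> F)) v = sum g (Q - F)"
          unfolding net_def g_def src'_def tgt'_def by (intro sum.cong) auto
        moreover have "net src' tgt' (Q \<inter> F) v = - sum g (F \<inter> Q)"
          unfolding net_def g_def src'_def tgt'_def sum_negf[symmetric] Int_commute[of Q F]
          by (intro sum.cong) auto
        ultimately show ?thesis by simp
      qed
      ultimately show ?thesis using path_net[OF q, of v] unfolding Q_def by simp
    qed
    obtain Q2 where Q2: "finite Q2" "card Q2 = Suc (card P)" "edge_disjoint_paths F' src tgt s t Q2"
    proof -
      have a1: "\<forall>v. v \<noteq> s \<and> v \<noteq> t \<longrightarrow> net src tgt F' v = 0" using netF' netF by simp
      have a2: "net src tgt F' s = int (Suc (card P))" using netF' netF st by simp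
      show ?thesis using that decomp[OF fF' st a1 a2] by auto
    qed
    have "edge_disjoint_paths E src tgt s t Q2"
      unfolding edge_disjoint_paths_def
    proof (intro conjI ballI impI)
      fix r assume "r \<in> Q2"
      then have "is_st_path F' src tgt s t r" using Q2(3) unfolding edge_disjoint_paths_def by simp
      then show "is_st_path E src tgt s t r" using path_mono F'E by metis
    next
      fix r r' assume "r \<in> Q2" "r' \<in> Q2" "r \<noteq> r'"
      then show "set r \<inter> set r' = {}" using Q2(3) unfolding edge_disjoint_paths_def by simp
    qed
    then have "card Q2 \<le> card P" by (rule mx[OF Q2(1)])
    then show ?thesis using Q2(2) by simp
  next
    case False
    define X where "X = {e \<in> E. src e \<in> R \<and> tgt e \<notin> R}"
    have sR: "s \<in> R" unfolding R_def reach_def by simp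
    have cut: "is_st_cut E src tgt s t X"
      unfolding is_st_cut_def
    proof (intro conjI allI impI)
      show "X \<subseteq> E" unfolding X_def by auto
      fix p assume p: "is_st_path E src tgt s t p"
      obtain e where "e \<in> set p" "src e \<in> R" "tgt e \<notin> R" using path_cross[OF p sR False] by blast
      moreover have "e \<in> E" using p \<open>e \<in> set p\<close> unfolding is_st_path_def by auto
      ultimately show "set p \<inter> X \<noteq> {}" unfolding X_def by auto
    qed
    have XF: "X \<subseteq> F"
    proof
      fix e assume e: "e \<in> X"
      show "e \<in> F"
      proof (rule ccontr)
        assume "e \<notin> F"
        then have "src' e = src e" "tgt' e = tgt e" unfolding src'_def tgt'_def by auto
        then show False using e reach_closed[of "src' e" E src' tgt' s e] unfolding X_def R_def by auto
      qed
    qed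
    have one: "card (X \<inter> set p) \<le> 1" if pP: "p \<in> P" for p
    proof -
      have p: "is_st_path E src tgt s t p" using paths pP by blast
      have clo: "src e \<in> R" if "e \<in> set p" "tgt e \<in> R" for e
      proof -
        have "e \<in> F" "e \<in> E" using that pP FE unfolding F_def by auto
        then show ?thesis using that reach_closed[of "src' e" E src' tgt' s e] unfolding R_def src'_def tgt'_def
          by auto
      qed
      have "a = b" if a: "a \<in> X \<inter> set p" and b: "b \<in> X \<inter> set p" for a b
      proof (rule ccontr)
        assume ab: "a \<noteq> b"
        obtain ia where ia: "ia < length p" "p ! ia = a" using a by (auto simp: in_set_conv_nth)
        obtain ib where ib: "ib < length p" "p ! ib = b" using b by (auto simp: in_set_conv_nth)
        have "ia \<noteq> ib" using ia ib ab by auto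
        then consider "ia < ib" | "ib < ia" by linarith
        then show False
        proof cases
          case 1
          have "src (p ! ib) \<notin> R" using no_reenter[OF p clo _ 1 ib(1)] a ia unfolding X_def by auto
          then show False using b ib unfolding X_def by auto
        next
          case 2
          have "src (p ! ia) \<notin> R" using no_reenter[OF p clo _ 2 ia(1)] b ib unfolding X_def by auto
          then show False using a ia unfolding X_def by auto
        qed
      qed
      then show ?thesis using card_le_Suc0_iff_eq[of "X \<inter> set p"] by auto
    qed
    have "X = (\<Union>p\<in>P. X \<inter> set p)" using XF unfolding F_def by auto
    then have "card X \<le> (\<Sum>p\<in>P. card (X \<inter> set p))" using card_UN_le[OF fP, of "\<lambda>p. X \<inter> set p"] by simp
    also have "\<dots> \<le> (\<Sum>p\<in>P. 1)" using one by (intro sum_mono) auto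
    finally show ?thesis using cut by auto
  qed
qed

lemma mincut_struct:
  assumes fE: "finite E" and mP: "max_disjoint_paths E src tgt s t P"
    and X: "X \<in> min_cuts E src tgt s t"
  shows "X \<subseteq> (\<Union>p\<in>P. set p)" and "\<And>p. p \<in> P \<Longrightarrow> \<exists>a. X \<inter> set p = {a}"
proof -
  have fP: "finite P" using mP unfolding max_disjoint_paths_def by simp
  have paths: "\<And>p. p \<in> P \<Longrightarrow> is_st_path E src tgt s t p"
    using mP unfolding max_disjoint_paths_def edge_disjoint_paths_def by simp
  have disj: "\<And>p q. p \<in> P \<Longrightarrow> q \<in> P \<Longrightarrow> p \<noteq> q \<Longrightarrow> set p \<inter> set q = {}"
    using mP unfolding max_disjoint_paths_def edge_disjoint_paths_def by simp
  obtain Xc where Xc: "is_st_cut E src tgt s t Xc" "card Xc \<le> card P"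
    using menger_cut[OF fE mP] by blast
  have cX: "is_st_cut E src tgt s t X" and le: "card X \<le> card Xc"
    using X Xc(1) unfolding min_cuts_def by auto
  have XE: "X \<subseteq> E" using cX unfolding is_st_cut_def by simp
  have fX: "finite X" using finite_subset[OF XE fE] .
  define A where "A p = X \<inter> set p" for p
  have Ane: "A p \<noteq> {}" if "p \<in> P" for p
    using cX paths[OF that] unfolding is_st_cut_def A_def by blast
  have fA: "finite (A p)" for p unfolding A_def by simp
  have cA1: "1 \<le> card (A p)" if "p \<in> P" for p
    using Ane[OF that] fA[of p] by (simp add: Suc_le_eq card_gt_0_iff)
  have sub: "(\<Union>p\<in>P. A p) \<subseteq> X" unfolding A_def by auto
  have cU: "card (\<Union>p\<in>P. A p) = (\<Sum>p\<in>P. card (A p))"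
    using fP fA disj unfolding A_def by (intro card_UN_disjoint) auto
  have "(\<Sum>p\<in>P. card (A p)) \<le> card X" using cU card_mono[OF fX sub] by simp
  also have "\<dots> \<le> card P" using le Xc(2) by simp
  finally have sle: "(\<Sum>p\<in>P. card (A p)) \<le> card P" .
  have each: "card (A p) = 1" if pP: "p \<in> P" for p
  proof (rule ccontr)
    assume "card (A p) \<noteq> 1"
    then have "1 < card (A p)" using cA1[OF pP] by simp
    then have "(\<Sum>q\<in>P. (1::nat)) < (\<Sum>q\<in>P. card (A q))"
      using fP cA1 pP by (intro sum_strict_mono_ex1) auto
    then show False using sle by simp
  qed
  have "card P \<le> (\<Sum>p\<in>P. card (A p))" using each by simp
  then have "card (\<Union>p\<in>P. A p) = card X" using cU sle le Xc(2) card_mono[OF fX sub] by simp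
  then have "(\<Union>p\<in>P. A p) = X" using card_subset_eq[OF fX sub] by simp
  then show "X \<subseteq> (\<Union>p\<in>P. set p)" unfolding A_def by auto
  show "\<exists>a. X \<inter> set p = {a}" if "p \<in> P" for p
    using each[OF that] unfolding A_def by (simp add: card_1_singleton_iff)
qed

lemma S_max_mem:
  "e \<in> S_max P Z \<longleftrightarrow> (\<exists>p\<in>P. set p \<inter> Z \<noteq> {} \<and> e = p ! (GREATEST i. i < length p \<and> p ! i \<in> Z))"
  unfolding S_max_def by auto

lemma S_min_mem:
  "e \<in> S_min P Z \<longleftrightarrow> (\<exists>p\<in>P. set p \<inter> Z \<noteq> {} \<and> e = p ! (LEAST i. i < length p \<and> p ! i \<in> Z))"
  unfolding S_min_def by auto

lemma greatest_idx:
  assumes "set p \<inter> Z \<noteq> {}"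
  shows "(GREATEST i. i < length p \<and> p ! i \<in> Z) < length p"
proof -
  define Q where "Q i = (i < length p \<and> p ! i \<in> Z)" for i
  obtain i where "i < length p" "p ! i \<in> Z" using assms by (auto simp: in_set_conv_nth)
  then have qi: "Q i" unfolding Q_def by simp
  have bd: "\<And>y. Q y \<Longrightarrow> y \<le> length p" unfolding Q_def by simp
  have "Q (Greatest Q)" by (rule GreatestI_nat[of Q i "length p", OF qi bd])
  then show ?thesis unfolding Q_def by simp
qed

lemma least_idx:
  assumes "set p \<inter> Z \<noteq> {}"
  shows "(LEAST i. i < length p \<and> p ! i \<in> Z) < length p"
proof -
  define Q where "Q i = (i < length p \<and> p ! i \<in> Z)" for i
  obtain i where "i < length p" "p ! i \<in> Z" using assms by (auto simp: in_set_conv_nth)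
  then have qi: "Q i" unfolding Q_def by simp
  have "Q (Least Q)" by (rule LeastI[of Q i, OF qi])
  then show ?thesis unfolding Q_def by simp
qed

lemma per_index:
  assumes fE: "finite E" and mP: "max_disjoint_paths E src tgt s t P"
    and X: "X \<in> min_cuts E src tgt s t" and Y: "Y \<in> min_cuts E src tgt s t"
  shows "of_bool (e \<in> S_max P (X \<union> Y)) + of_bool (e \<in> S_min P (X \<union> Y))
       = (of_bool (e \<in> X) + of_bool (e \<in> Y) :: nat)"
proof -
  define Z where "Z = X \<union> Y"
  have paths: "\<And>p. p \<in> P \<Longrightarrow> is_st_path E src tgt s t p"
    using mP unfolding max_disjoint_paths_def edge_disjoint_paths_def by simp
  have disj: "\<And>p q. p \<in> P \<Longrightarrow> q \<in> P \<Longrightarrow> p \<noteq> q \<Longrightarrow> set p \<inter> set q = {}"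
    using mP unfolding max_disjoint_paths_def edge_disjoint_paths_def by simp
  note XS = mincut_struct[OF fE mP X] and YS = mincut_struct[OF fE mP Y]
  show ?thesis
  proof (cases "\<exists>p0\<in>P. e \<in> set p0")
    case False
    have "e \<notin> X" "e \<notin> Y" using XS(1) YS(1) False by auto
    moreover have "e \<notin> S_max P Z"
    proof
      assume "e \<in> S_max P Z"
      then obtain p where "p \<in> P" "set p \<inter> Z \<noteq> {}" "e = p ! (GREATEST i. i < length p \<and> p ! i \<in> Z)"
        unfolding S_max_mem by blast
      then show False using False greatest_idx[of p Z] by (metis nth_mem)
    qed
    moreover have "e \<notin> S_min P Z"
    proof
      assume "e \<in> S_min P Z"
      then obtain p where "p \<in> P" "set p \<inter> Z \<noteq> {}" "e = p ! (LEAST i. i < length p \<and> p ! i \<in> Z)"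
        unfolding S_min_mem by blast
      then show False using False least_idx[of p Z] by (metis nth_mem)
    qed
    ultimately show ?thesis unfolding Z_def by simp
  next
    case True
    then obtain p0 where p0: "p0 \<in> P" "e \<in> set p0" by blast
    have dp: "distinct p0" using path_distinct[OF paths[OF p0(1)]] .
    obtain a where a: "X \<inter> set p0 = {a}" using XS(2)[OF p0(1)] by blast
    obtain b where b: "Y \<inter> set p0 = {b}" using YS(2)[OF p0(1)] by blast
    obtain ia where ia: "ia < length p0" "p0 ! ia = a" using a by (metis Int_iff in_set_conv_nth insertI1)
    obtain ib where ib: "ib < length p0" "p0 ! ib = b" using b by (metis Int_iff in_set_conv_nth insertI1)
    have pred: "(i < length p0 \<and> p0 ! i \<in> Z) \<longleftrightarrow> (i = ia \<or> i = ib)" for i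
    proof
      assume h: "i < length p0 \<and> p0 ! i \<in> Z"
      then have "p0 ! i \<in> X \<inter> set p0 \<or> p0 ! i \<in> Y \<inter> set p0" unfolding Z_def by auto
      then have "p0 ! i = a \<or> p0 ! i = b" using a b by auto
      then show "i = ia \<or> i = ib" using ia ib h dp nth_eq_iff_index_eq by metis
    next
      assume "i = ia \<or> i = ib"
      then show "i < length p0 \<and> p0 ! i \<in> Z" using ia ib a b unfolding Z_def by auto
    qed
    have ne: "set p0 \<inter> Z \<noteq> {}" using a unfolding Z_def by auto
    have G: "(GREATEST i. i < length p0 \<and> p0 ! i \<in> Z) = max ia ib"
      unfolding pred by (rule Greatest_equality) auto
    have L: "(LEAST i. i < length p0 \<and> p0 ! i \<in> Z) = min ia ib"
      unfolding pred by (rule Least_equality) auto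
    have other: "e \<noteq> p ! j" if "p \<in> P" "p \<noteq> p0" "j < length p" for p j
      using disj[OF that(1) p0(1) that(2)] p0(2) that(3) by (metis disjoint_iff nth_mem)
    have smax: "e \<in> S_max P Z \<longleftrightarrow> e = p0 ! max ia ib"
    proof
      assume "e \<in> S_max P Z"
      then obtain p where p: "p \<in> P" "set p \<inter> Z \<noteq> {}" "e = p ! (GREATEST i. i < length p \<and> p ! i \<in> Z)"
        unfolding S_max_mem by blast
      then have "p = p0" using other greatest_idx[OF p(2)] by blast
      then show "e = p0 ! max ia ib" using p G by simp
    next
      assume "e = p0 ! max ia ib"
      then show "e \<in> S_max P Z" unfolding S_max_mem using p0 ne G by auto
    qed
    have smin: "e \<in> S_min P Z \<longleftrightarrow> e = p0 ! min ia ib"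
    proof
      assume "e \<in> S_min P Z"
      then obtain p where p: "p \<in> P" "set p \<inter> Z \<noteq> {}" "e = p ! (LEAST i. i < length p \<and> p ! i \<in> Z)"
        unfolding S_min_mem by blast
      then have "p = p0" using other least_idx[OF p(2)] by blast
      then show "e = p0 ! min ia ib" using p L by simp
    next
      assume "e = p0 ! min ia ib"
      then show "e \<in> S_min P Z" unfolding S_min_mem using p0 ne L by auto
    qed
    have ex: "e \<in> X \<longleftrightarrow> e = p0 ! ia" using a ia p0(2) by auto
    have ey: "e \<in> Y \<longleftrightarrow> e = p0 ! ib" using b ib p0(2) by auto
    show ?thesis unfolding Z_def[symmetric] smax smin ex ey
      by (cases "ia \<le> ib") (auto simp: max_def min_def)
  qed
qed

lemma card_filter_sum: "card {i. i < (n::nat) \<and> Q i} = (\<Sum>i<n. of_bool (Q i) :: nat)"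
proof (induction n)
  case 0 then show ?case by simp
next
  case (Suc n)
  have "{i. i < Suc n \<and> Q i} = {i. i < n \<and> Q i} \<union> (if Q n then {n} else {})" using less_Suc_eq by auto
  then show ?case using Suc by (simp add: card_Un_disjoint)
qed

theorem lemma3:
  fixes E :: "'e set" and src tgt :: "'e \<Rightarrow> 'v" and s t :: 'v
    and P :: "'e list set" and k :: nat and e :: 'e
  assumes "finite E"
    and "max_disjoint_paths E src tgt s t P"
    and "k \<ge> 1"
    and "e \<in> E"
    and "C1 \<in> U_lr E src tgt s t k" and "C2 \<in> U_lr E src tgt s t k"
  shows "mult e (L_join P C1 C2) + mult e (L_meet P C1 C2) = mult e C1 + mult e C2"
proof -
  have l1: "length C1 = k" and s1: "set C1 \<subseteq> min_cuts E src tgt s t" using assms(5) unfolding U_lr_def by auto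
  have l2: "length C2 = k" and s2: "set C2 \<subseteq> min_cuts E src tgt s t" using assms(6) unfolding U_lr_def by auto
  have lj: "length (L_join P C1 C2) = k" "length (L_meet P C1 C2) = k"
    unfolding L_join_def L_meet_def using l1 l2 by auto
  have nj: "L_join P C1 C2 ! i = S_max P (C1 ! i \<union> C2 ! i)" "L_meet P C1 C2 ! i = S_min P (C1 ! i \<union> C2 ! i)"
    if "i < k" for i unfolding L_join_def L_meet_def using that l1 l2 by auto
  have "mult e (L_join P C1 C2) + mult e (L_meet P C1 C2)
      = (\<Sum>i<k. of_bool (e \<in> S_max P (C1 ! i \<union> C2 ! i)) + of_bool (e \<in> S_min P (C1 ! i \<union> C2 ! i)))"
    unfolding mult_def lj card_filter_sum sum.distrib[symmetric] using nj by (intro sum.cong) auto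
  also have "\<dots> = (\<Sum>i<k. of_bool (e \<in> C1 ! i) + of_bool (e \<in> C2 ! i))"
  proof (rule sum.cong[OF refl])
    fix i assume "i \<in> {..<k}"
    then have "C1 ! i \<in> min_cuts E src tgt s t" "C2 ! i \<in> min_cuts E src tgt s t"
      using s1 s2 l1 l2 by (auto intro: nth_mem[THEN subsetD[rotated]])
    then show "of_bool (e \<in> S_max P (C1 ! i \<union> C2 ! i)) + of_bool (e \<in> S_min P (C1 ! i \<union> C2 ! i))
        = (of_bool (e \<in> C1 ! i) + of_bool (e \<in> C2 ! i) :: nat)"
      by (rule per_index[OF assms(1,2)])
  qed
  also have "\<dots> = mult e C1 + mult e C2"
    unfolding mult_def l1 l2 card_filter_sum sum.distrib ..
  finally show ?thesis .
qed

end
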